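(* Let $n \ge 1$ be an integer, let $SV_n = \{C_{1,j} : 1 \le j \le n\}$ (the vertical straight polyomino $R_{1,n}$) and $SH_n = \{C_{i,1} : 1 \le i \le n\}$ (the horizontal straight polyomino $R_{n,1}$), and consider packings on the $n \times n$ board. Then $$\mathrm{cp}_{\mathrm{free}}(SV_n) = \mathrm{cp}_{\mathrm{free}}(SH_n) = \mathrm{cp}_{\mathrm{fixed}}(SV_n) = \mathrm{cp}_{\mathrm{fixed}}(SH_n) = n.$$
   Context: For integers $i,j$, $C_{i,j}$ denotes the unit square cell in column $i$ and row $j$ of the integer grid (columns numbered left to right, rows numbered top to bottom). A polyomino is a finite set of cells; its size is its number of cells. For a polyomino $\mathcal{P}$ of size $n$ the board is $\mathbb{B} = \{C_{i,j} : 1 \le i,j \le n\}$. The shift of $\mathcal{P}$ by integers $(c,d)$ is $\mathcal{P}+(c,d) = \{C_{x+c,y+d} : C_{x,y} \in \mathcal{P}\}$. A set of polyominoes is a valid arrangement if each of them is contained in $\mathbb{B}$ and they are pairwise disjoint (as sets of cells). A fixed copy of $\mathcal{P}$ is any shift of $\mathcal{P}$; a free copy is any shift of any rotation of $\mathcal{P}$ by a multiple of $90^\circ$ (for $SV_n$ and $SH_n$ the free copies are exactly the shifts of $SV_n$ and of $SH_n$). A fixed (resp. free) packing of $\mathcal{P}$ is a set of fixed (resp. free) copies of $\mathcal{P}$ forming a valid arrangement such that adding any further fixed (resp. free) copy of $\mathcal{P}$ yields an invalid arrangement. The clumsy fixed packing number $\mathrm{cp}_{\mathrm{fixed}}(\mathcal{P})$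 (resp. clumsy free packing number $\mathrm{cp}_{\mathrm{free}}(\mathcal{P})$) is the minimum number of polyominoes in a fixed (resp. free) packing of $\mathcal{P}$ on the $n\times n$ board. *)

theory Defs
  imports Main
begin

text \<open>A cell C_{i,j} is represented by the pair (i,j) :: int \<times> int
  (column i, row j). A polyomino is a finite set of cells.\<close>

type_synonym cell = "int \<times> int"
type_synonym polyomino = "cell set"

definition board :: "nat \<Rightarrow> polyomino" where
  "board n = {(i, j). 1 \<le> i \<and> i \<le> int n \<and> 1 \<le> j \<and> j \<le> int n}"

definition shift :: "polyomino \<Rightarrow> int \<Rightarrow> int \<Rightarrow> polyomino" where
  "shift P c d = (\<lambda>(x, y). (x + c, y + d)) ` P"

text \<open>Rotation by 90 degrees (about the origin; any other centre differs by a shift).\<close>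
definition rot90 :: "polyomino \<Rightarrow> polyomino" where
  "rot90 P = (\<lambda>(x, y). (- y, x)) ` P"

definition fixed_copy :: "polyomino \<Rightarrow> polyomino \<Rightarrow> bool" where
  "fixed_copy P Q \<longleftrightarrow> (\<exists>c d. Q = shift P c d)"

definition free_copy :: "polyomino \<Rightarrow> polyomino \<Rightarrow> bool" where
  "free_copy P Q \<longleftrightarrow> (\<exists>k::nat. \<exists>c d. Q = shift ((rot90 ^^ k) P) c d)"

definition valid_arrangement :: "nat \<Rightarrow> polyomino set \<Rightarrow> bool" where
  "valid_arrangement n S \<longleftrightarrow>
     (\<forall>Q\<in>S. Q \<subseteq> board n) \<and> (\<forall>Q\<in>S. \<forall>R\<in>S. Q \<noteq> R \<longrightarrow> Q \<inter> R = {})"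

definition packing :: "(polyomino \<Rightarrow> polyomino \<Rightarrow> bool) \<Rightarrow> polyomino \<Rightarrow> polyomino set \<Rightarrow> bool" where
  "packing copy P S \<longleftrightarrow>
     (\<forall>Q\<in>S. copy P Q) \<and> valid_arrangement (card P) S \<and>
     (\<forall>Q. copy P Q \<and> Q \<notin> S \<longrightarrow> \<not> valid_arrangement (card P) (insert Q S))"

definition cp_fixed :: "polyomino \<Rightarrow> nat" where
  "cp_fixed P = (LEAST k. \<exists>S. packing fixed_copy P S \<and> card S = k)"

definition cp_free :: "polyomino \<Rightarrow> nat" where
  "cp_free P = (LEAST k. \<exists>S. packing free_copy P S \<and> card S = k)"

definition SV :: "nat \<Rightarrow> polyomino" where
  "SV n = {(1, j) | j. 1 \<le> j \<and> j \<le> int n}"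

definition SH :: "nat \<Rightarrow> polyomino" where
  "SH n = {(i, 1) | i. 1 \<le> i \<and> i \<le> int n}"

end

theory Submission
  imports Defs
begin

definition V :: "nat \<Rightarrow> int \<Rightarrow> int \<Rightarrow> polyomino" where
  "V n a b = (\<lambda>j. (a, b + j)) ` {1..int n}"
definition H :: "nat \<Rightarrow> int \<Rightarrow> int \<Rightarrow> polyomino" where
  "H n a b = (\<lambda>i. (a + i, b)) ` {1..int n}"

definition FF :: "nat \<Rightarrow> polyomino set" where
  "FF n = {Q. \<exists>a b. Q = V n a b \<or> Q = H n a b}"

lemma SV_V: "SV n = V n 1 0"
  unfolding SV_def V_def by auto
lemma SH_H: "SH n = H n 0 1"
  unfolding SH_def H_def by auto

lemma shift_V: "shift (V n a b) c d = V n (a + c) (b + d)"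
  unfolding shift_def V_def by (auto simp: image_image algebra_simps)
lemma shift_H: "shift (H n a b) c d = H n (a + c) (b + d)"
  unfolding shift_def H_def by (auto simp: image_image algebra_simps)

lemma rot_V: "rot90 (V n a b) = H n (- b - int n - 1) a"
proof -
  have "rot90 (V n a b) = (\<lambda>j. (- (b + j), a)) ` {1..int n}"
    unfolding rot90_def V_def by (auto simp: image_image)
  also have "\<dots> = H n (- b - int n - 1) a"
    unfolding H_def
  proof (intro equalityI subsetI)
    fix x assume "x \<in> (\<lambda>j. (- (b + j), a)) ` {1..int n}"
    then obtain j where j: "j \<in> {1..int n}" "x = (- (b + j), a)" by auto
    show "x \<in> (\<lambda>i. (- b - int n - 1 + i, a)) ` {1..int n}"
      by (rule image_eqI[where x = "int n + 1 - j"]) (use j in auto)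
  next
    fix x assume "x \<in> (\<lambda>i. (- b - int n - 1 + i, a)) ` {1..int n}"
    then obtain j where j: "j \<in> {1..int n}" "x = (- b - int n - 1 + j, a)" by auto
    show "x \<in> (\<lambda>j. (- (b + j), a)) ` {1..int n}"
      by (rule image_eqI[where x = "int n + 1 - j"]) (use j in auto)
  qed
  finally show ?thesis .
qed

lemma rot_H: "rot90 (H n a b) = V n (- b) a"
  unfolding rot90_def H_def V_def by (auto simp: image_image)

lemma rot_FF: "Q \<in> FF n \<Longrightarrow> rot90 Q \<in> FF n"
  unfolding FF_def using rot_V rot_H by blast

lemma rotk_FF: "Q \<in> FF n \<Longrightarrow> (rot90 ^^ k) Q \<in> FF n"
  by (induction k) (auto intro: rot_FF)

lemma shift_FF: "Q \<in> FF n \<Longrightarrow> shift Q c d \<in> FF n"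
  unfolding FF_def using shift_V shift_H by blast

lemma free_SV: "free_copy (SV n) Q \<Longrightarrow> Q \<in> FF n"
proof -
  assume "free_copy (SV n) Q"
  then obtain k c d where Q: "Q = shift ((rot90 ^^ k) (SV n)) c d" unfolding free_copy_def by blast
  have "SV n \<in> FF n" unfolding SV_V FF_def by blast
  then have "(rot90 ^^ k) (SV n) \<in> FF n" by (rule rotk_FF)
  then show ?thesis unfolding Q by (rule shift_FF)
qed
lemma free_SH: "free_copy (SH n) Q \<Longrightarrow> Q \<in> FF n"
proof -
  assume "free_copy (SH n) Q"
  then obtain k c d where Q: "Q = shift ((rot90 ^^ k) (SH n)) c d" unfolding free_copy_def by blast
  have "SH n \<in> FF n" unfolding SH_H FF_def by blast
  then have "(rot90 ^^ k) (SH n) \<in> FF n" by (rule rotk_FF)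
  then show ?thesis unfolding Q by (rule shift_FF)
qed

lemma V_board: assumes "n \<ge> 1" "V n a b \<subseteq> board n"
  shows "a \<in> {1..int n} \<and> b = 0"
proof -
  have "(a, b + 1) \<in> V n a b" "(a, b + int n) \<in> V n a b"
    unfolding V_def using assms(1) by auto
  then have "(a, b + 1) \<in> board n" "(a, b + int n) \<in> board n" using assms(2) by blast+
  then show ?thesis unfolding board_def by auto
qed
lemma H_board: assumes "n \<ge> 1" "H n a b \<subseteq> board n"
  shows "b \<in> {1..int n} \<and> a = 0"
proof -
  have "(a + 1, b) \<in> H n a b" "(a + int n, b) \<in> H n a b"
    unfolding H_def using assms(1) by auto
  then have "(a + 1, b) \<in> board n" "(a + int n, b) \<in> board n" using assms(2) by blast+
  then show ?thesis unfolding board_def by auto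
qed

lemma V_in_board: "a \<in> {1..int n} \<Longrightarrow> V n a 0 \<subseteq> board n"
  unfolding V_def board_def by auto
lemma H_in_board: "b \<in> {1..int n} \<Longrightarrow> H n 0 b \<subseteq> board n"
  unfolding H_def board_def by auto

lemma VV_int: "V n a 0 \<inter> V n a' 0 \<noteq> {} \<Longrightarrow> a = a'"
  unfolding V_def by auto
lemma HH_int: "H n 0 b \<inter> H n 0 b' \<noteq> {} \<Longrightarrow> b = b'"
  unfolding H_def by auto
lemma VH_int: "a \<in> {1..int n} \<Longrightarrow> b \<in> {1..int n} \<Longrightarrow> (a, b) \<in> V n a 0 \<inter> H n 0 b"
  unfolding V_def H_def by auto

lemma card_V: "card (V n a b) = n"
  unfolding V_def by (subst card_image) (auto simp: inj_on_def)
lemma card_H: "card (H n a b) = n"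
  unfolding H_def by (subst card_image) (auto simp: inj_on_def)

lemma V_inj: "n \<ge> 1 \<Longrightarrow> V n x 0 = V n y 0 \<Longrightarrow> x = y"
proof -
  assume "n \<ge> 1" "V n x 0 = V n y 0"
  moreover have "(x, 1) \<in> V n x 0" unfolding V_def using \<open>n \<ge> 1\<close> by auto
  ultimately have "(x, 1) \<in> V n y 0" by simp
  then show "x = y" unfolding V_def by auto
qed
lemma H_inj: "n \<ge> 1 \<Longrightarrow> H n 0 x = H n 0 y \<Longrightarrow> x = y"
proof -
  assume "n \<ge> 1" "H n 0 x = H n 0 y"
  moreover have "(1, x) \<in> H n 0 x" unfolding H_def using \<open>n \<ge> 1\<close> by auto
  ultimately have "(1, x) \<in> H n 0 y" by simp
  then show "x = y" unfolding H_def by auto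
qed

lemma card_cols: assumes "n \<ge> 1" shows "card ((\<lambda>a. V n a 0) ` {1..int n}) = n"
proof -
  have "inj_on (\<lambda>a. V n a 0) {1..int n}" unfolding inj_on_def using V_inj[OF assms] by blast
  then show ?thesis by (simp add: card_image)
qed
lemma card_rows: assumes "n \<ge> 1" shows "card ((\<lambda>b. H n 0 b) ` {1..int n}) = n"
proof -
  have "inj_on (\<lambda>b. H n 0 b) {1..int n}" unfolding inj_on_def using H_inj[OF assms] by blast
  then show ?thesis by (simp add: card_image)
qed

lemma pack_sub: "packing copy P S \<Longrightarrow> Q \<in> S \<Longrightarrow> copy P Q \<and> Q \<subseteq> board (card P)"
  unfolding packing_def valid_arrangement_def by auto
lemma pack_disj: "packing copy P S \<Longrightarrow> Q \<in> S \<Longrightarrow> R \<in> S \<Longrightarrow> Q \<noteq> R \<Longrightarrow> Q \<inter> R = {}"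
  unfolding packing_def valid_arrangement_def by auto
lemma pack_max: "packing copy P S \<Longrightarrow> copy P Q \<Longrightarrow> Q \<subseteq> board (card P) \<Longrightarrow> Q \<notin> S
   \<Longrightarrow> \<exists>R\<in>S. Q \<inter> R \<noteq> {}"
proof -
  assume p: "packing copy P S" and c: "copy P Q" and b: "Q \<subseteq> board (card P)" and n: "Q \<notin> S"
  have nv: "\<not> valid_arrangement (card P) (insert Q S)" using p c n unfolding packing_def by blast
  have vs: "valid_arrangement (card P) S" using p unfolding packing_def by blast
  have "\<forall>X\<in>insert Q S. X \<subseteq> board (card P)" using vs b unfolding valid_arrangement_def by blast
  with nv obtain X Y where XY: "X \<in> insert Q S" "Y \<in> insert Q S" "X \<noteq> Y" "X \<inter> Y \<noteq> {}"
    unfolding valid_arrangement_def by blast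
  show ?thesis
  proof (cases "X = Q")
    case True then show ?thesis using XY by auto
  next
    case False
    then have "X \<in> S" using XY by auto
    show ?thesis
    proof (cases "Y = Q")
      case True then show ?thesis using XY \<open>X \<in> S\<close> by (auto simp: Int_commute)
    next
      case False
      then have "Y \<in> S" using XY by auto
      then show ?thesis using vs XY \<open>X \<in> S\<close> unfolding valid_arrangement_def by blast
    qed
  qed
qed
lemma pack_intro: "(\<forall>Q\<in>S. copy P Q) \<Longrightarrow> valid_arrangement (card P) S \<Longrightarrow>
   (\<forall>Q. copy P Q \<and> Q \<subseteq> board (card P) \<and> Q \<notin> S \<longrightarrow> (\<exists>R\<in>S. R \<noteq> Q \<and> Q \<inter> R \<noteq> {}))
   \<Longrightarrow> packing copy P S"
proof -
  assume c: "\<forall>Q\<in>S. copy P Q" and v: "valid_arrangement (card P) S"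
    and m: "\<forall>Q. copy P Q \<and> Q \<subseteq> board (card P) \<and> Q \<notin> S \<longrightarrow> (\<exists>R\<in>S. R \<noteq> Q \<and> Q \<inter> R \<noteq> {})"
  have nv: "\<not> valid_arrangement (card P) (insert Q S)" if q: "copy P Q" "Q \<notin> S" for Q
  proof
    assume vi: "valid_arrangement (card P) (insert Q S)"
    then have "Q \<subseteq> board (card P)" unfolding valid_arrangement_def by blast
    with m q obtain R where R: "R \<in> S" "R \<noteq> Q" "Q \<inter> R \<noteq> {}" by blast
    have "Q \<in> insert Q S" "R \<in> insert Q S" using R(1) by auto
    then have "Q \<inter> R = {}" using vi R(2) unfolding valid_arrangement_def by metis
    with R(3) show False by simp
  qed
  show ?thesis unfolding packing_def
  proof (intro conjI allI impI)
    show "\<forall>Q\<in>S. copy P Q" by (rule c)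
    show "valid_arrangement (card P) S" by (rule v)
  next
    fix Q assume a: "copy P Q \<and> Q \<notin> S"
    show "\<not> valid_arrangement (card P) (insert Q S)" using a by (intro nv) simp_all
  qed
qed

lemma least_n: assumes "packing copy P S0" "card S0 = n" "\<And>S. packing copy P S \<Longrightarrow> card S = n"
  shows "(LEAST k. \<exists>S. packing copy P S \<and> card S = k) = n"
proof (rule Least_equality)
  show "\<exists>S. packing copy P S \<and> card S = n" using assms(1,2) by blast
next
  fix y assume "\<exists>S. packing copy P S \<and> card S = y"
  then obtain S where "packing copy P S" "card S = y" by blast
  then show "n \<le> y" using assms(3) by fastforce
qed


abbreviation cols :: "nat \<Rightarrow> polyomino set" where
  "cols n \<equiv> (\<lambda>a. V n a 0) ` {1..int n}"
abbreviation rows :: "nat \<Rightarrow> polyomino set" where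
  "rows n \<equiv> (\<lambda>b. H n 0 b) ` {1..int n}"

lemma cols_max: assumes "S \<subseteq> cols n" "\<And>Q. Q \<in> cols n \<Longrightarrow> Q \<notin> S \<Longrightarrow> \<exists>R\<in>S. Q \<inter> R \<noteq> {}"
  shows "S = cols n"
proof
  show "cols n \<subseteq> S"
  proof
    fix Q assume Q: "Q \<in> cols n"
    show "Q \<in> S"
    proof (rule ccontr)
      assume "Q \<notin> S"
      then obtain R where R: "R \<in> S" "Q \<inter> R \<noteq> {}" using assms(2) Q by blast
      from Q obtain a where a: "Q = V n a 0" by blast
      from R assms(1) obtain a' where a': "R = V n a' 0" by blast
      have "a = a'" using VV_int R(2) a a' by blast
      then show False using a a' R \<open>Q \<notin> S\<close> by simp
    qed
  qed
qed (rule assms(1))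

lemma rows_max: assumes "S \<subseteq> rows n" "\<And>Q. Q \<in> rows n \<Longrightarrow> Q \<notin> S \<Longrightarrow> \<exists>R\<in>S. Q \<inter> R \<noteq> {}"
  shows "S = rows n"
proof
  show "rows n \<subseteq> S"
  proof
    fix Q assume Q: "Q \<in> rows n"
    show "Q \<in> S"
    proof (rule ccontr)
      assume "Q \<notin> S"
      then obtain R where R: "R \<in> S" "Q \<inter> R \<noteq> {}" using assms(2) Q by blast
      from Q obtain a where a: "Q = H n 0 a" by blast
      from R assms(1) obtain a' where a': "R = H n 0 a'" by blast
      have "a = a'" using HH_int R(2) a a' by blast
      then show False using a a' R \<open>Q \<notin> S\<close> by simp
    qed
  qed
qed (rule assms(1))

lemma valid_cols: "valid_arrangement n (cols n)"
  unfolding valid_arrangement_def using V_in_board VV_int by blast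
lemma valid_rows: "valid_arrangement n (rows n)"
  unfolding valid_arrangement_def using H_in_board HH_int by blast

lemma maxlem_cols: assumes p: "packing copy P S" and cP: "card P = n"
  and c2: "\<And>Q. Q \<in> C \<Longrightarrow> copy P Q" and Q: "Q \<in> C" "Q \<in> cols n" "Q \<notin> S"
  shows "\<exists>R\<in>S. Q \<inter> R \<noteq> {}"
proof -
  obtain a where a: "a \<in> {1..int n}" "Q = V n a 0" using Q(2) by blast
  have "copy P Q" using c2 Q(1) .
  moreover have "Q \<subseteq> board (card P)" using V_in_board[OF a(1)] a(2) cP by simp
  ultimately show ?thesis using pack_max[OF p] Q(3) by blast
qed
lemma maxlem_rows: assumes p: "packing copy P S" and cP: "card P = n"
  and c2: "\<And>Q. Q \<in> C \<Longrightarrow> copy P Q" and Q: "Q \<in> C" "Q \<in> rows n" "Q \<notin> S"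
  shows "\<exists>R\<in>S. Q \<inter> R \<noteq> {}"
proof -
  obtain a where a: "a \<in> {1..int n}" "Q = H n 0 a" using Q(2) by blast
  have "copy P Q" using c2 Q(1) .
  moreover have "Q \<subseteq> board (card P)" using H_in_board[OF a(1)] a(2) cP by simp
  ultimately show ?thesis using pack_max[OF p] Q(3) by blast
qed

lemma gen_cols:
  assumes n: "n \<ge> 1" and cP: "card P = n"
    and c1: "\<And>Q. copy P Q \<Longrightarrow> Q \<subseteq> board n \<Longrightarrow> Q \<in> cols n"
    and c2: "\<And>Q. Q \<in> cols n \<Longrightarrow> copy P Q"
  shows "(LEAST k. \<exists>S. packing copy P S \<and> card S = k) = n"
proof (rule least_n)
  show "packing copy P (cols n)"
  proof (rule pack_intro)
    show "\<forall>Q\<in>cols n. copy P Q" using c2 by blast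
    show "valid_arrangement (card P) (cols n)" using valid_cols cP by simp
    show "\<forall>Q. copy P Q \<and> Q \<subseteq> board (card P) \<and> Q \<notin> cols n \<longrightarrow> (\<exists>R\<in>cols n. R \<noteq> Q \<and> Q \<inter> R \<noteq> {})"
      using c1 cP by blast
  qed
  show "card (cols n) = n" using card_cols[OF n] .
next
  fix S assume p: "packing copy P S"
  have sub: "S \<subseteq> cols n"
  proof
    fix Q assume "Q \<in> S"
    then have "copy P Q" "Q \<subseteq> board n" using pack_sub[OF p] cP by auto
    then show "Q \<in> cols n" by (rule c1)
  qed
  have "S = cols n"
  proof (rule cols_max[OF sub])
    fix Q assume Q: "Q \<in> cols n" "Q \<notin> S"
    show "\<exists>R\<in>S. Q \<inter> R \<noteq> {}" using maxlem_cols[OF p cP c2, where Q=Q] Q by blast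
  qed
  then show "card S = n" using card_cols[OF n] by simp
qed

lemma gen_rows:
  assumes n: "n \<ge> 1" and cP: "card P = n"
    and c1: "\<And>Q. copy P Q \<Longrightarrow> Q \<subseteq> board n \<Longrightarrow> Q \<in> rows n"
    and c2: "\<And>Q. Q \<in> rows n \<Longrightarrow> copy P Q"
  shows "(LEAST k. \<exists>S. packing copy P S \<and> card S = k) = n"
proof (rule least_n)
  show "packing copy P (rows n)"
  proof (rule pack_intro)
    show "\<forall>Q\<in>rows n. copy P Q" using c2 by blast
    show "valid_arrangement (card P) (rows n)" using valid_rows cP by simp
    show "\<forall>Q. copy P Q \<and> Q \<subseteq> board (card P) \<and> Q \<notin> rows n \<longrightarrow> (\<exists>R\<in>rows n. R \<noteq> Q \<and> Q \<inter> R \<noteq> {})"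
      using c1 cP by blast
  qed
  show "card (rows n) = n" using card_rows[OF n] .
next
  fix S assume p: "packing copy P S"
  have sub: "S \<subseteq> rows n"
  proof
    fix Q assume "Q \<in> S"
    then have "copy P Q" "Q \<subseteq> board n" using pack_sub[OF p] cP by auto
    then show "Q \<in> rows n" by (rule c1)
  qed
  have "S = rows n"
  proof (rule rows_max[OF sub])
    fix Q assume Q: "Q \<in> rows n" "Q \<notin> S"
    show "\<exists>R\<in>S. Q \<inter> R \<noteq> {}" using maxlem_rows[OF p cP c2, where Q=Q] Q by blast
  qed
  then show "card S = n" using card_rows[OF n] by simp
qed

lemma gen_free:
  assumes n: "n \<ge> 1" and cP: "card P = n"
    and c1: "\<And>Q. copy P Q \<Longrightarrow> Q \<subseteq> board n \<Longrightarrow> Q \<in> cols n \<union> rows n"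
    and c2: "\<And>Q. Q \<in> cols n \<union> rows n \<Longrightarrow> copy P Q"
  shows "(LEAST k. \<exists>S. packing copy P S \<and> card S = k) = n"
proof (rule least_n)
  have V1: "V n 1 0 \<in> cols n" using n by auto
  show "packing copy P (cols n)"
  proof (rule pack_intro)
    show "\<forall>Q\<in>cols n. copy P Q" using c2 by blast
    show "valid_arrangement (card P) (cols n)" using valid_cols cP by simp
    show "\<forall>Q. copy P Q \<and> Q \<subseteq> board (card P) \<and> Q \<notin> cols n \<longrightarrow> (\<exists>R\<in>cols n. R \<noteq> Q \<and> Q \<inter> R \<noteq> {})"
    proof (intro allI impI)
      fix Q assume a: "copy P Q \<and> Q \<subseteq> board (card P) \<and> Q \<notin> cols n"
      then have "Q \<in> rows n" using c1 cP by blast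
      then obtain b where b: "b \<in> {1..int n}" "Q = H n 0 b" by blast
      have "(1, b) \<in> Q \<inter> V n 1 0" using VH_int[of 1 n b] b n by auto
      moreover have "V n 1 0 \<noteq> Q" using a V1 by blast
      ultimately show "\<exists>R\<in>cols n. R \<noteq> Q \<and> Q \<inter> R \<noteq> {}" using V1 by blast
    qed
  qed
  show "card (cols n) = n" using card_cols[OF n] .
next
  fix S assume p: "packing copy P S"
  have sub: "S \<subseteq> cols n \<union> rows n"
  proof
    fix Q assume "Q \<in> S"
    then have "copy P Q" "Q \<subseteq> board n" using pack_sub[OF p] cP by auto
    then show "Q \<in> cols n \<union> rows n" by (rule c1)
  qed
  show "card S = n"
  proof (cases "\<exists>a\<in>{1..int n}. V n a 0 \<in> S")
    case True
    then obtain a where a: "a \<in> {1..int n}" "V n a 0 \<in> S" by blast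
    have sub2: "S \<subseteq> cols n"
    proof
      fix Q assume Q: "Q \<in> S"
      show "Q \<in> cols n"
      proof (cases "Q \<in> cols n")
        case False
        then obtain b where b: "b \<in> {1..int n}" "Q = H n 0 b" using sub Q by blast
        have "(a, b) \<in> V n a 0 \<inter> Q" using VH_int[of a n b] a b by auto
        then have "Q = V n a 0" using pack_disj[OF p a(2) Q] by blast
        then show ?thesis using a by blast
      qed
    qed
    have "S = cols n"
    proof (rule cols_max[OF sub2])
      fix Q assume Q: "Q \<in> cols n" "Q \<notin> S"
      show "\<exists>R\<in>S. Q \<inter> R \<noteq> {}" using maxlem_cols[OF p cP c2, where Q=Q] Q by blast
    qed
    then show "card S = n" using card_cols[OF n] by simp
  next
    case False
    have sub2: "S \<subseteq> rows n" using sub False by blast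
    have "S = rows n"
    proof (rule rows_max[OF sub2])
      fix Q assume Q: "Q \<in> rows n" "Q \<notin> S"
      show "\<exists>R\<in>S. Q \<inter> R \<noteq> {}" using maxlem_rows[OF p cP c2, where Q=Q] Q by blast
    qed
    then show "card S = n" using card_rows[OF n] by simp
  qed
qed

lemma FF_board: assumes "n \<ge> 1" "Q \<in> FF n" "Q \<subseteq> board n" shows "Q \<in> cols n \<union> rows n"
proof -
  from assms(2) obtain a b where "Q = V n a b \<or> Q = H n a b" unfolding FF_def by blast
  then show ?thesis
  proof
    assume Q: "Q = V n a b"
    then have "a \<in> {1..int n} \<and> b = 0" using V_board assms by blast
    then show ?thesis using Q by blast
  next
    assume Q: "Q = H n a b"
    then have "b \<in> {1..int n} \<and> a = 0" using H_board assms by blast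
    then show ?thesis using Q by blast
  qed
qed

lemma card_SV: "card (SV n) = n" unfolding SV_V by (rule card_V)
lemma card_SH: "card (SH n) = n" unfolding SH_H by (rule card_H)

lemma free_SV_cols: "Q \<in> cols n \<union> rows n \<Longrightarrow> free_copy (SV n) Q"
proof -
  assume "Q \<in> cols n \<union> rows n"
  then consider a where "Q = V n a 0" | b where "Q = H n 0 b" by blast
  then show ?thesis
  proof cases
    case 1
    have "Q = shift ((rot90 ^^ 0) (SV n)) (a - 1) 0" unfolding 1 SV_V by (simp add: shift_V)
    then show ?thesis unfolding free_copy_def by blast
  next
    case 2
    have "Q = shift ((rot90 ^^ 1) (SV n)) (int n + 1) (b - 1)" unfolding 2 SV_V by (simp add: shift_H rot_V)
    then show ?thesis unfolding free_copy_def by blast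
  qed
qed

lemma free_SH_cols: "Q \<in> cols n \<union> rows n \<Longrightarrow> free_copy (SH n) Q"
proof -
  assume "Q \<in> cols n \<union> rows n"
  then consider a where "Q = V n a 0" | b where "Q = H n 0 b" by blast
  then show ?thesis
  proof cases
    case 1
    have "Q = shift ((rot90 ^^ 1) (SH n)) (a + 1) 0" unfolding 1 SH_H by (simp add: shift_V rot_H)
    then show ?thesis unfolding free_copy_def by blast
  next
    case 2
    have "Q = shift ((rot90 ^^ 0) (SH n)) 0 (b - 1)" unfolding 2 SH_H by (simp add: shift_H)
    then show ?thesis unfolding free_copy_def by blast
  qed
qed

lemma fixed_SV: "n \<ge> 1 \<Longrightarrow> fixed_copy (SV n) Q \<Longrightarrow> Q \<subseteq> board n \<Longrightarrow> Q \<in> cols n"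
proof -
  assume n: "n \<ge> 1" and f: "fixed_copy (SV n) Q" and b: "Q \<subseteq> board n"
  from f obtain c d where Q: "Q = V n (1 + c) d" unfolding fixed_copy_def SV_V by (auto simp: shift_V)
  then have "1 + c \<in> {1..int n} \<and> d = 0" using V_board n b by blast
  then show ?thesis using Q by blast
qed
lemma fixed_SH: "n \<ge> 1 \<Longrightarrow> fixed_copy (SH n) Q \<Longrightarrow> Q \<subseteq> board n \<Longrightarrow> Q \<in> rows n"
proof -
  assume n: "n \<ge> 1" and f: "fixed_copy (SH n) Q" and b: "Q \<subseteq> board n"
  from f obtain c d where Q: "Q = H n c (1 + d)" unfolding fixed_copy_def SH_H by (auto simp: shift_H)
  then have "1 + d \<in> {1..int n} \<and> c = 0" using H_board n b by blast
  then show ?thesis using Q by blast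
qed
lemma fixed_SV2: "Q \<in> cols n \<Longrightarrow> fixed_copy (SV n) Q"
proof -
  assume "Q \<in> cols n"
  then obtain a where "Q = V n a 0" by blast
  then have "Q = shift (SV n) (a - 1) 0" unfolding SV_V by (simp add: shift_V)
  then show ?thesis unfolding fixed_copy_def by blast
qed
lemma fixed_SH2: "Q \<in> rows n \<Longrightarrow> fixed_copy (SH n) Q"
proof -
  assume "Q \<in> rows n"
  then obtain b where "Q = H n 0 b" by blast
  then have "Q = shift (SH n) 0 (b - 1)" unfolding SH_H by (simp add: shift_H)
  then show ?thesis unfolding fixed_copy_def by blast
qed

theorem theorem1:
  fixes n :: nat
  assumes "n \<ge> 1"
  shows "cp_free (SV n) = n \<and> cp_free (SH n) = n \<and> cp_fixed (SV n) = n \<and> cp_fixed (SH n) = n"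
proof (intro conjI)
  show "cp_free (SV n) = n" unfolding cp_free_def
  proof (rule gen_free[OF assms card_SV])
    fix Q assume "free_copy (SV n) Q" "Q \<subseteq> board n"
    then show "Q \<in> cols n \<union> rows n" by (intro FF_board[OF assms] free_SV)
  next
    fix Q assume "Q \<in> cols n \<union> rows n" then show "free_copy (SV n) Q" by (rule free_SV_cols)
  qed
  show "cp_free (SH n) = n" unfolding cp_free_def
  proof (rule gen_free[OF assms card_SH])
    fix Q assume "free_copy (SH n) Q" "Q \<subseteq> board n"
    then show "Q \<in> cols n \<union> rows n" by (intro FF_board[OF assms] free_SH)
  next
    fix Q assume "Q \<in> cols n \<union> rows n" then show "free_copy (SH n) Q" by (rule free_SH_cols)
  qed
  show "cp_fixed (SV n) = n" unfolding cp_fixed_def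
  proof (rule gen_cols[OF assms card_SV])
    fix Q assume "fixed_copy (SV n) Q" "Q \<subseteq> board n"
    then show "Q \<in> cols n" by (rule fixed_SV[OF assms])
  next
    fix Q assume "Q \<in> cols n" then show "fixed_copy (SV n) Q" by (rule fixed_SV2)
  qed
  show "cp_fixed (SH n) = n" unfolding cp_fixed_def
  proof (rule gen_rows[OF assms card_SH])
    fix Q assume "fixed_copy (SH n) Q" "Q \<subseteq> board n"
    then show "Q \<in> rows n" by (rule fixed_SH[OF assms])
  next
    fix Q assume "Q \<in> rows n" then show "fixed_copy (SH n) Q" by (rule fixed_SH2)
  qed
qed

end
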